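(* Let $(X,d)$ be a metric space, $\mu$ a non-atomic Borel measure on $X$, $f:X\to\mathbb R$ a function and $\gamma:[0,h]\to X$ a path in $\Gamma^\mu$ parametrized by $\mu$-arc length. If there is a nonnegative Borel measurable $\rho:X\to\mathbb R$ such that $|f(\gamma(s))-f(\gamma(t))|\le\int_{\gamma|_{[s,t]}}\rho<\infty$ for every $0\le s<t\le h$, then $f\circ\gamma:[0,h]\to\mathbb R$ is absolutely continuous.
   Context: A path is a continuous map $\gamma:[a,b]\to X$; a subpath is a restriction to a subinterval, trivial if that interval is a point; $\mathrm{Im}(\gamma)=\gamma([a,b])$. $\mu$ non-atomic: $\mu(\{x\})=0$ for all $x$. $\Gamma^\mu$ is the set of all non-trivial injective paths $\gamma$ with $0<\mu(\mathrm{Im}(\tilde\gamma))<\infty$ for every non-trivial subpath $\tilde\gamma$. For Borel $g\ge0$, $\int_\gamma g:=\int_{\mathrm{Im}(\gamma)}g\,d\mu$. A path $\gamma:[0,h]\to X$ in $\Gamma^\mu$ is parametrized by $\mu$-arc length if $\mu(\gamma([0,t]))=t$ for all $t\in[0,h]$. *)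

theory Defs
  imports "HOL-Analysis.Analysis"
begin

definition abs_continuous_on :: "real \<Rightarrow> real \<Rightarrow> (real \<Rightarrow> real) \<Rightarrow> bool" where
  "abs_continuous_on a b g \<longleftrightarrow>
     (\<forall>\<epsilon>>0. \<exists>\<delta>>0. \<forall>(n::nat) (l::nat \<Rightarrow> real) (r::nat \<Rightarrow> real).
        (\<forall>i<n. a \<le> l i \<and> l i \<le> r i \<and> r i \<le> b) \<longrightarrow>
        (\<forall>i<n. \<forall>j<n. i \<noteq> j \<longrightarrow> {l i<..<r i} \<inter> {l j<..<r j} = {}) \<longrightarrow>
        (\<Sum>i<n. r i - l i) < \<delta> \<longrightarrow>
        (\<Sum>i<n. \<bar>g (r i) - g (l i)\<bar>) < \<epsilon>)"

definition in_Gamma_mu :: "'a::metric_space measure \<Rightarrow> (real \<Rightarrow> 'a) \<Rightarrow> real \<Rightarrow> real \<Rightarrow> bool" where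
  "in_Gamma_mu M \<gamma> a b \<longleftrightarrow>
     a < b \<and> continuous_on {a..b} \<gamma> \<and> inj_on \<gamma> {a..b} \<and>
     (\<forall>s t. a \<le> s \<and> s < t \<and> t \<le> b \<longrightarrow>
        0 < emeasure M (\<gamma> ` {s..t}) \<and> emeasure M (\<gamma> ` {s..t}) < \<infinity>)"

definition mu_arc_length_param :: "'a::metric_space measure \<Rightarrow> (real \<Rightarrow> 'a) \<Rightarrow> real \<Rightarrow> bool" where
  "mu_arc_length_param M \<gamma> h \<longleftrightarrow>
     (\<forall>t\<in>{0..h}. emeasure M (\<gamma> ` {0..t}) = ennreal t)"

end

theory Submission imports Defs begin

lemma ac_eps_delta:
  fixes g :: "'a \<Rightarrow> ennreal"
  assumes g[measurable]: "g \<in> borel_measurable M" and fin: "(\<integral>\<^sup>+ x. g x \<partial>M) < \<infinity>"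
    and gfin: "\<And>x. g x < top" and e: "(0::real) < e"
  shows "\<exists>d>0. \<forall>A\<in>sets M. emeasure M A < ennreal d \<longrightarrow> (\<integral>\<^sup>+ x\<in>A. g x \<partial>M) < ennreal e"
proof -
  define f where "f i x = g x - of_nat i" for i :: nat and x
  have fm[measurable]: "\<And>i. f i \<in> borel_measurable M" unfolding f_def by measurable
  have dec: "decseq f"
    by (intro decseq_SucI le_funI) (simp add: f_def ennreal_minus_mono)
  have fin_i: "(\<integral>\<^sup>+ x. f i x \<partial>M) < \<infinity>" for i
    using fin by (rule le_less_trans[rotated]) (auto intro!: nn_integral_mono simp: f_def)
  have inf0: "(INF i. f i x) = 0" for x
  proof -
    obtain r where r: "g x = ennreal r" "r \<ge> 0" using gfin[of x] by (cases "g x") auto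
    obtain n :: nat where "r \<le> n" using real_arch_simple by blast
    hence "f n x = 0" unfolding f_def r
      by (simp add: diff_eq_0_ennreal)
    thus ?thesis by (metis INF_lower UNIV_I antisym zero_le)
  qed
  have "(INF i. integral\<^sup>N M (f i)) = 0"
    using nn_integral_monotone_convergence_INF_decseq[OF dec fm fin_i[of 0]] inf0 by simp
  hence "(INF i. integral\<^sup>N M (f i)) < ennreal (e/2)" using e by simp
  then obtain i where i: "integral\<^sup>N M (f i) < ennreal (e/2)" by (auto simp: INF_less_iff)
  define d where "d = e / (2 * (real i + 1))"
  have d: "d > 0" using e by (simp add: d_def)
  show ?thesis
  proof (intro exI[of _ d] conjI d ballI impI)
    fix A assume A[measurable]: "A \<in> sets M" and MA: "emeasure M A < ennreal d"
    have "(\<integral>\<^sup>+ x\<in>A. g x \<partial>M) \<le> (\<integral>\<^sup>+ x. f i x * indicator A x + of_nat i * indicator A x \<partial>M)"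
      by (intro nn_integral_mono) (auto simp: f_def indicator_def diff_add_self_ennreal nle_le)
    also have "\<dots> = (\<integral>\<^sup>+ x. f i x * indicator A x \<partial>M) + of_nat i * emeasure M A"
      by (subst nn_integral_add) (auto simp: nn_integral_cmult)
    also have "\<dots> \<le> integral\<^sup>N M (f i) + of_nat i * ennreal d"
      by (intro add_mono nn_integral_mono mult_left_mono) (use MA in \<open>auto simp: indicator_def\<close>)
    also have "\<dots> < ennreal (e/2) + ennreal (e/2)"
    proof -
      have "of_nat i * ennreal d = ennreal (i * d)" using d by (simp add: ennreal_mult'' ennreal_of_nat_eq_real_of_nat)
      also have "i * d \<le> e/2" using e unfolding d_def by (simp add: field_simps)
      hence "ennreal (i*d) \<le> ennreal (e/2)" by (rule ennreal_leI)
      finally have "of_nat i * ennreal d \<le> ennreal (e/2)" .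
      with i show ?thesis
        by (metis ennreal_add_diff_cancel_right ennreal_less_top
             ennreal_minus_mono linorder_not_less top_neq_ennreal)
    qed
    also have "\<dots> = ennreal e" using e by (simp flip: ennreal_plus)
    finally show "(\<integral>\<^sup>+ x\<in>A. g x \<partial>M) < ennreal e" .
  qed
qed

theorem theorem2p4:
  fixes M :: "'a::metric_space measure"
    and f :: "'a \<Rightarrow> real"
    and \<gamma> :: "real \<Rightarrow> 'a"
    and h :: real
    and \<rho> :: "'a \<Rightarrow> real"
  assumes borel_M: "sets M = sets borel"
    and nonatomic: "\<And>x. emeasure M {x} = 0"
    and path: "in_Gamma_mu M \<gamma> 0 h"
    and arclen: "mu_arc_length_param M \<gamma> h"
    and rho_meas: "\<rho> \<in> borel_measurable borel"
    and rho_nonneg: "\<And>x. 0 \<le> \<rho> x"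
    and upper: "\<And>s t. 0 \<le> s \<Longrightarrow> s < t \<Longrightarrow> t \<le> h \<Longrightarrow>
        ennreal \<bar>f (\<gamma> s) - f (\<gamma> t)\<bar> \<le> (\<integral>\<^sup>+ x \<in> \<gamma> ` {s..t}. ennreal (\<rho> x) \<partial>M)
        \<and> (\<integral>\<^sup>+ x \<in> \<gamma> ` {s..t}. ennreal (\<rho> x) \<partial>M) < \<infinity>"
  shows "abs_continuous_on 0 h (f \<circ> \<gamma>)"
proof -
  have h: "0 < h" and cont: "continuous_on {0..h} \<gamma>" and inj: "inj_on \<gamma> {0..h}"
    using path unfolding in_Gamma_mu_def by auto
  have rhoM[measurable]: "\<rho> \<in> borel_measurable M"
    using rho_meas measurable_cong_sets[OF borel_M refl] by blast
  have pts: "{x} \<in> sets M" for x using borel_M by simp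
  have pts2: "{x, y} \<in> sets M" for x y using borel_M by simp
  have clo: "\<gamma> ` {l..r} \<in> sets M" if "0 \<le> l" "r \<le> h" for l r
  proof -
    have "compact (\<gamma> ` {l..r})"
      using that by (intro compact_continuous_image continuous_on_subset[OF cont]) auto
    thus ?thesis using borel_M by (simp add: compact_imp_closed)
  qed
  define Op where "Op l r = \<gamma> ` {l<..<r}" for l r
  have Oeq: "Op l r = \<gamma> ` {l..r} - {\<gamma> l, \<gamma> r}" if "0 \<le> l" "l \<le> r" "r \<le> h" for l r
  proof
    show "Op l r \<subseteq> \<gamma> ` {l..r} - {\<gamma> l, \<gamma> r}"
    proof
      fix y assume "y \<in> Op l r"
      then obtain a where a: "a \<in> {l<..<r}" "y = \<gamma> a" unfolding Op_def by auto
      have "\<gamma> a \<noteq> \<gamma> l" "\<gamma> a \<noteq> \<gamma> r" using a that inj_onD[OF inj, of a l] inj_onD[OF inj, of a r] by auto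
      thus "y \<in> \<gamma> ` {l..r} - {\<gamma> l, \<gamma> r}" using a by auto
    qed
  next
    show "\<gamma> ` {l..r} - {\<gamma> l, \<gamma> r} \<subseteq> Op l r" unfolding Op_def
      by (auto simp: less_eq_real_def)
  qed
  have Osets: "Op l r \<in> sets M" if "0 \<le> l" "l \<le> r" "r \<le> h" for l r
  proof -
    have "{\<gamma> l, \<gamma> r} \<in> sets M" using borel_M by simp
    thus ?thesis using Oeq[OF that] clo[of l r] that by (metis sets.Diff)
  qed
  define N where "N = density M (\<lambda>x. ennreal (\<rho> x))"
  have sN: "sets N = sets M" unfolding N_def by simp
  have eN: "emeasure N A = (\<integral>\<^sup>+ x\<in>A. ennreal (\<rho> x) \<partial>M)" if "A \<in> sets M" for A
    unfolding N_def using that by (simp add: emeasure_density)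
  have N0: "emeasure N {x} = 0" for x
    using eN[OF pts[of x]] nn_integral_indicator_singleton[OF pts, of "\<lambda>x. ennreal (\<rho> x)" x] nonatomic
    by simp
  have bnd: "ennreal \<bar>f (\<gamma> r) - f (\<gamma> l)\<bar> \<le> emeasure N (Op l r)"
    if "0 \<le> l" "l \<le> r" "r \<le> h" for l r
  proof (cases "l = r")
    case True thus ?thesis by simp
  next
    case False
    hence lr: "l < r" using that by simp
    have "ennreal \<bar>f (\<gamma> r) - f (\<gamma> l)\<bar> \<le> emeasure N (\<gamma> ` {l..r})"
      using upper[OF that(1) lr that(3)] eN[OF clo[OF that(1,3)]] by (simp add: abs_minus_commute)
    also have "\<dots> \<le> emeasure N (Op l r \<union> ({\<gamma> l} \<union> {\<gamma> r}))"
    proof (rule emeasure_mono)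
      show "\<gamma> ` {l..r} \<subseteq> Op l r \<union> ({\<gamma> l} \<union> {\<gamma> r})" using Oeq[OF that] by auto
      show "Op l r \<union> ({\<gamma> l} \<union> {\<gamma> r}) \<in> sets N"
        unfolding sN using Osets[OF that] pts by (intro sets.Un) auto
    qed
    also have "\<dots> \<le> emeasure N (Op l r) + emeasure N ({\<gamma> l} \<union> {\<gamma> r})"
      by (intro emeasure_subadditive) (auto simp: sN Osets[OF that] pts pts2)
    also have "emeasure N ({\<gamma> l} \<union> {\<gamma> r}) \<le> emeasure N {\<gamma> l} + emeasure N {\<gamma> r}"
      by (intro emeasure_subadditive) (auto simp: sN pts pts2)
    finally show ?thesis using N0 by simp
  qed
  have Mbnd: "emeasure M (Op l r) \<le> ennreal (r - l)"
    if "0 \<le> l" "l \<le> r" "r \<le> h" for l r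
  proof -
    have d: "\<gamma> ` {0..l} \<inter> Op l r = {}"
    proof (rule ccontr)
      assume "\<gamma> ` {0..l} \<inter> Op l r \<noteq> {}"
      then obtain a b where a: "a \<in> {0..l}" and b: "b \<in> {l<..<r}" and eq: "\<gamma> a = \<gamma> b"
        unfolding Op_def by blast
      have "a \<in> {0..h}" "b \<in> {0..h}" using a b that by auto
      hence "a = b" using inj_onD[OF inj eq] by simp
      thus False using a b by auto
    qed
    have "ennreal l + emeasure M (Op l r) = emeasure M (\<gamma> ` {0..l} \<union> Op l r)"
    proof -
      have "emeasure M (\<gamma> ` {0..l}) = ennreal l" using arclen that unfolding mu_arc_length_param_def by simp
      thus ?thesis using plus_emeasure[OF clo[of 0 l] Osets[OF that] d] that by simp
    qed
    also have "\<dots> \<le> emeasure M (\<gamma> ` {0..r})"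
      using clo[of 0 r] that by (intro emeasure_mono) (auto simp: Op_def)
    also have "\<dots> = ennreal r" using arclen that unfolding mu_arc_length_param_def by simp
    finally have "ennreal l + emeasure M (Op l r) \<le> ennreal r" .
    thus ?thesis using that
      by (metis add.commute ennreal_le_minus_iff ennreal_minus)
  qed
  define S where "S = \<gamma> ` {0..h}"
  have Ssets: "S \<in> sets M" unfolding S_def using clo[of 0 h] h by simp
  define g where "g x = ennreal (\<rho> x) * indicator S x" for x
  have gm: "g \<in> borel_measurable M" unfolding g_def using Ssets by measurable
  have gfin: "(\<integral>\<^sup>+ x. g x \<partial>M) < \<infinity>"
    using upper[of 0 h] h unfolding g_def S_def by simp
  show ?thesis unfolding abs_continuous_on_def
  proof (intro allI impI)
    fix e :: real assume e: "0 < e"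
    obtain d where d: "d > 0" and dA: "\<And>A. A \<in> sets M \<Longrightarrow> emeasure M A < ennreal d
        \<Longrightarrow> (\<integral>\<^sup>+ x\<in>A. g x \<partial>M) < ennreal e"
    proof -
      have "g x < top" for x unfolding g_def by (simp add: indicator_def)
      thus ?thesis using ac_eps_delta[OF gm gfin _ e] that by blast
    qed
    show "\<exists>\<delta>>0. \<forall>(n::nat) (l::nat \<Rightarrow> real) (r::nat \<Rightarrow> real).
        (\<forall>i<n. 0 \<le> l i \<and> l i \<le> r i \<and> r i \<le> h) \<longrightarrow>
        (\<forall>i<n. \<forall>j<n. i \<noteq> j \<longrightarrow> {l i<..<r i} \<inter> {l j<..<r j} = {}) \<longrightarrow>
        (\<Sum>i<n. r i - l i) < \<delta> \<longrightarrow>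
        (\<Sum>i<n. \<bar>(f \<circ> \<gamma>) (r i) - (f \<circ> \<gamma>) (l i)\<bar>) < e"
    proof (intro exI[of _ d] conjI d allI impI)
      fix n :: nat and l r :: "nat \<Rightarrow> real"
      assume lr: "\<forall>i<n. 0 \<le> l i \<and> l i \<le> r i \<and> r i \<le> h"
        and dis: "\<forall>i<n. \<forall>j<n. i \<noteq> j \<longrightarrow> {l i<..<r i} \<inter> {l j<..<r j} = {}"
        and sm: "(\<Sum>i<n. r i - l i) < d"
      define B where "B i = Op (l i) (r i)" for i
      have Bs: "B i \<in> sets M" if "i < n" for i using Osets lr that unfolding B_def by auto
      have djB: "disjoint_family_on B {..<n}"
        unfolding disjoint_family_on_def
      proof (intro ballI impI)
        fix i j assume ij: "i \<in> {..<n}" "j \<in> {..<n}" "i \<noteq> j"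
        show "B i \<inter> B j = {}"
        proof (rule ccontr)
          assume "B i \<inter> B j \<noteq> {}"
          then obtain a b where a: "a \<in> {l i<..<r i}" and b: "b \<in> {l j<..<r j}" and eq: "\<gamma> a = \<gamma> b"
            unfolding B_def Op_def by blast
          have "a \<in> {0..h}" "b \<in> {0..h}" proof -
            have "0 \<le> l i" "r i \<le> h" "0 \<le> l j" "r j \<le> h" using lr ij by auto
            thus "a \<in> {0..h}" "b \<in> {0..h}" using a b by auto
          qed
          hence "a = b" using inj_onD[OF inj eq] by simp
          moreover have "{l i<..<r i} \<inter> {l j<..<r j} = {}" using dis ij by auto
          ultimately show False using a b by auto
        qed
      qed
      define U where "U = (\<Union>i\<in>{..<n}. B i)"
      have Us: "U \<in> sets M" unfolding U_def using Bs by auto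
      have US: "U \<subseteq> S"
      proof
        fix y assume "y \<in> U"
        then obtain i a where i: "i < n" and a: "a \<in> {l i<..<r i}" and y: "y = \<gamma> a"
          unfolding U_def B_def Op_def by blast
        have "0 \<le> l i" "r i \<le> h" using lr i by auto
        thus "y \<in> S" unfolding S_def using a y by auto
      qed
      have "emeasure M U = (\<Sum>i<n. emeasure M (B i))"
        unfolding U_def using djB Bs by (intro sum_emeasure[symmetric]) auto
      also have "\<dots> \<le> (\<Sum>i<n. ennreal (r i - l i))"
        using lr Mbnd unfolding B_def by (intro sum_mono) auto
      also have "\<dots> = ennreal (\<Sum>i<n. r i - l i)"
        using lr by (intro sum_ennreal) auto
      also have "\<dots> < ennreal d" using sm d by (simp add: ennreal_lessI)
      finally have "(\<integral>\<^sup>+ x\<in>U. g x \<partial>M) < ennreal e" using dA[OF Us] by blast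
      also have "(\<integral>\<^sup>+ x\<in>U. g x \<partial>M) = emeasure N U"
        unfolding eN[OF Us] g_def using US
        by (intro nn_integral_cong) (auto simp: indicator_def)
      also have "emeasure N U = (\<Sum>i<n. emeasure N (B i))"
        unfolding U_def using djB Bs by (intro sum_emeasure[symmetric]) (auto simp: sN)
      finally have lt: "(\<Sum>i<n. emeasure N (B i)) < ennreal e" .
      have "ennreal (\<Sum>i<n. \<bar>(f \<circ> \<gamma>) (r i) - (f \<circ> \<gamma>) (l i)\<bar>)
          = (\<Sum>i<n. ennreal \<bar>f (\<gamma> (r i)) - f (\<gamma> (l i))\<bar>)"
        by (subst sum_ennreal[symmetric]) auto
      also have "\<dots> \<le> (\<Sum>i<n. emeasure N (B i))"
        using lr bnd unfolding B_def by (intro sum_mono) auto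
      finally have "ennreal (\<Sum>i<n. \<bar>(f \<circ> \<gamma>) (r i) - (f \<circ> \<gamma>) (l i)\<bar>) < ennreal e"
        using lt by simp
      thus "(\<Sum>i<n. \<bar>(f \<circ> \<gamma>) (r i) - (f \<circ> \<gamma>) (l i)\<bar>) < e"
        by (simp add: ennreal_less_iff)
    qed
  qed
qed
end
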